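(* Let $n\ge 4$ and let $\mathcal{W}(n)=(Q,\Sigma,\delta,0,\{n-2\})$ with $Q=\{0,\dots,n-1\}$, where $\Sigma$ consists of the following letters: (1) $b_i$ for $1\le i\le n-3$, inducing the transformation $(0\to n-1)(i\to n-2)(n-2\to n-1)$; (2) one letter $c_i$ for every transformation of $Q$ that maps $0$ to $n-2$, maps $\{n-2,n-1\}$ to $n-1$ and maps $Q_M$ into $Q\setminus\{0,n-2\}$, other than the transformation $(0\to n-2)(Q_M\to n-1)(n-2\to n-1)$; (3) one letter $d_i$ for every transformation of $Q$ that maps $0$ to a state of $Q_M$, maps $Q_M$ into $\{n-2,n-1\}$ and maps $\{n-2,n-1\}$ to $n-1$, other than the transformations $(0\to q)(Q_M\to n-1)(n-2\to n-1)$ with $q\in Q_M$. Then the transition semigroup of $\mathcal{W}(n)$ is $\mathbf{W}^{\ge 6}_{\mathrm{bf}}(n)$.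
   Context: $Q_M=\{1,\dots,n-3\}$. Transformations act on the right, $q(st)=(qs)t$; the transition semigroup of a DFA is the semigroup of transformations of its state set induced by nonempty words. For $S\subseteq Q$ and $q\in Q$, $(S\to q)$ denotes the transformation mapping every state of $S$ to $q$ and fixing all other states; $(p\to q)$ means $(\{p\}\to q)$; juxtaposition denotes composition. Let $\mathbf{B}_{\mathrm{bf}}(n)$ be the set of all transformations $t$ of $Q$ with $0\notin Qt$, $(n-1)t=n-1$, $(n-2)t=n-1$, and for all $j\ge1$, either $0t^j=n-1$ or $0t^j\ne qt^j$ for all $0<q<n-1$. Then $\mathbf{W}^{\ge 6}_{\mathrm{bf}}(n)=\{t\in\mathbf{B}_{\mathrm{bf}}(n)\mid 0t\in\{n-2,n-1\}$, or $0t\in Q_M$ and $qt\in\{n-2,n-1\}$ for all $q\in Q_M\}$. *)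

theory Defs
  imports Main
begin

text \<open>States are the naturals 0..n-1. A transformation of Q is represented as a
function nat => nat mapping Q into Q and fixing every number >= n (so that
equality of transformations is extensional equality of functions).
Transformations act on the right: q(st) = (qs)t, i.e. st corresponds to t o s.\<close>

definition transf :: "nat \<Rightarrow> (nat \<Rightarrow> nat) set" where
  "transf n = {t. (\<forall>q<n. t q < n) \<and> (\<forall>q\<ge>n. t q = q)}"

definition QM :: "nat \<Rightarrow> nat set" where
  "QM n = {1..n-3}"

definition trans_semigroup :: "(nat \<Rightarrow> nat) set \<Rightarrow> (nat \<Rightarrow> nat) set" where
  "trans_semigroup Sig =
     {foldl (\<lambda>t a. a \<circ> t) id w | w. w \<noteq> [] \<and> set w \<subseteq> Sig}"

definition B_bf :: "nat \<Rightarrow> (nat \<Rightarrow> nat) set" where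
  "B_bf n = {t \<in> transf n.
       0 \<notin> t ` {0..<n} \<and> t (n-1) = n-1 \<and> t (n-2) = n-1 \<and>
       (\<forall>j\<ge>1. (t ^^ j) 0 = n-1 \<or> (\<forall>q. 0 < q \<and> q < n-1 \<longrightarrow> (t ^^ j) 0 \<noteq> (t ^^ j) q))}"

definition W_bf6 :: "nat \<Rightarrow> (nat \<Rightarrow> nat) set" where
  "W_bf6 n = {t \<in> B_bf n. t 0 \<in> {n-2, n-1} \<or>
                 (t 0 \<in> QM n \<and> (\<forall>q\<in>QM n. t q \<in> {n-2, n-1}))}"

text \<open>Letter b_i: (0 -> n-1)(i -> n-2)(n-2 -> n-1), read as the simultaneous map.\<close>
definition bW :: "nat \<Rightarrow> nat \<Rightarrow> (nat \<Rightarrow> nat)" where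
  "bW n i = (\<lambda>q. if q = 0 then n-1 else if q = i then n-2 else if q = n-2 then n-1 else q)"

definition cExcl :: "nat \<Rightarrow> (nat \<Rightarrow> nat)" where
  "cExcl n = (\<lambda>q. if q = 0 then n-2 else if q < n then n-1 else q)"

definition dExcl :: "nat \<Rightarrow> nat \<Rightarrow> (nat \<Rightarrow> nat)" where
  "dExcl n p = (\<lambda>q. if q = 0 then p else if q < n then n-1 else q)"

definition c_letters :: "nat \<Rightarrow> (nat \<Rightarrow> nat) set" where
  "c_letters n = {t \<in> transf n. t 0 = n-2 \<and> t (n-2) = n-1 \<and> t (n-1) = n-1 \<and>
        (\<forall>q\<in>QM n. t q \<notin> {0, n-2}) \<and> t \<noteq> cExcl n}"

definition d_letters :: "nat \<Rightarrow> (nat \<Rightarrow> nat) set" where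
  "d_letters n = {t \<in> transf n. t 0 \<in> QM n \<and> (\<forall>q\<in>QM n. t q \<in> {n-2, n-1}) \<and>
        t (n-2) = n-1 \<and> t (n-1) = n-1 \<and> (\<forall>p\<in>QM n. t \<noteq> dExcl n p)}"

definition Sigma_W :: "nat \<Rightarrow> (nat \<Rightarrow> nat) set" where
  "Sigma_W n = {bW n i | i. 1 \<le> i \<and> i \<le> n-3} \<union> c_letters n \<union> d_letters n"

end

theory Submission imports Defs begin

definition ff :: "(nat\<Rightarrow>nat) \<Rightarrow> (nat\<Rightarrow>nat) \<Rightarrow> (nat\<Rightarrow>nat)" where "ff t a = a \<circ> t"

lemma ts_def2: "trans_semigroup Sig = {foldl ff id w | w. w \<noteq> [] \<and> set w \<subseteq> Sig}"
  unfolding trans_semigroup_def ff_def[abs_def] by simp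

lemma foldl_comp: "foldl ff x w = foldl ff id w \<circ> x"
proof (induct w arbitrary: x)
  case Nil then show ?case by simp
next
  case (Cons a w)
  have "foldl ff x (a#w) = foldl ff (a \<circ> x) w" by (simp only: foldl_Cons ff_def)
  also have "\<dots> = foldl ff id w \<circ> (a \<circ> x)" by (rule Cons)
  finally have e1: "foldl ff x (a#w) = foldl ff id w \<circ> (a \<circ> x)" .
  have "foldl ff id (a#w) = foldl ff (a \<circ> id) w" by (simp only: foldl_Cons ff_def)
  also have "\<dots> = foldl ff id w \<circ> (a \<circ> id)" by (rule Cons)
  finally have e2: "foldl ff id (a#w) = foldl ff id w \<circ> a" by simp
  show ?case by (simp only: e1 e2 comp_assoc)
qed

lemma ts_letter: "a \<in> Sig \<Longrightarrow> a \<in> trans_semigroup Sig"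
  unfolding ts_def2 by (rule CollectI, rule exI[of _ "[a]"]) (simp add: ff_def)

lemma ts_comp: assumes "s \<in> trans_semigroup Sig" "t \<in> trans_semigroup Sig"
  shows "t \<circ> s \<in> trans_semigroup Sig"
proof -
  obtain ws where ws: "s = foldl ff id ws" "ws \<noteq> []" "set ws \<subseteq> Sig"
    using assms(1) unfolding ts_def2 by blast
  obtain wt where wt: "t = foldl ff id wt" "wt \<noteq> []" "set wt \<subseteq> Sig"
    using assms(2) unfolding ts_def2 by blast
  have "foldl ff id (ws @ wt) = t \<circ> s" using foldl_comp[of s wt] ws wt by simp
  then show ?thesis unfolding ts_def2 using ws wt by (intro CollectI exI[of _ "ws@wt"]) auto
qed

lemma ts_induct: assumes "t \<in> trans_semigroup Sig"
  and base: "\<And>a. a \<in> Sig \<Longrightarrow> P a"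
  and step: "\<And>s a. P s \<Longrightarrow> a \<in> Sig \<Longrightarrow> P (a \<circ> s)"
  shows "P t"
proof -
  obtain w where w: "t = foldl ff id w" "w \<noteq> []" "set w \<subseteq> Sig"
    using assms(1) unfolding ts_def2 by blast
  have "w \<noteq> [] \<Longrightarrow> set w \<subseteq> Sig \<Longrightarrow> P (foldl ff id w)"
  proof (induct w rule: rev_induct)
    case Nil then show ?case by simp
  next
    case (snoc a w)
    show ?case
    proof (cases "w = []")
      case True then show ?thesis using snoc base by (simp add: ff_def)
    next
      case False
      have "foldl ff id (w @ [a]) = a \<circ> foldl ff id w" by (simp add: ff_def)
      have "P (foldl ff id w)" using snoc False by (simp add: id_def)
      then have "P (a \<circ> foldl ff id w)" using step snoc by simp
      then show ?thesis by (subst \<open>foldl ff id (w @ [a]) = a \<circ> foldl ff id w\<close>)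
    qed
  qed
  then show ?thesis using w by simp
qed

definition charW :: "nat \<Rightarrow> (nat\<Rightarrow>nat) \<Rightarrow> bool" where
"charW n t \<longleftrightarrow> t \<in> transf n \<and> t (n-2) = n-1 \<and> t (n-1) = n-1 \<and>
 ((t 0 = n-1 \<and> (\<forall>q\<in>QM n. t q \<noteq> 0)) \<or> (t 0 = n-2 \<and> (\<forall>q\<in>QM n. t q \<noteq> 0 \<and> t q \<noteq> n-2))
  \<or> (t 0 \<in> QM n \<and> (\<forall>q\<in>QM n. t q = n-2 \<or> t q = n-1)))"

lemma states: "4 \<le> n \<Longrightarrow> q = 0 \<or> q \<in> QM n \<or> q = n-2 \<or> q = n-1 \<or> n \<le> q"
  by (auto simp: QM_def)

lemma QM_iff: "q \<in> QM n \<longleftrightarrow> 1 \<le> q \<and> q \<le> n - 3" by (simp add: QM_def)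

lemma funpow_stay: assumes "(t ^^ k) x = c" "t c = c" "k \<le> j" shows "(t ^^ j) x = c"
  using assms(3)
proof (induct j rule: dec_induct)
  case base then show ?case using assms by simp
next
  case (step j) then show ?case using assms by simp
qed

lemma funpow2: "(t^^2) x = t (t x)" by (simp add: numeral_2_eq_2)
lemma funpow3: "(t^^3) x = t (t (t x))" by (simp add: numeral_3_eq_3)

lemma W_char: assumes n: "4 \<le> n" shows "t \<in> W_bf6 n \<longleftrightarrow> charW n t"
proof
  assume "t \<in> W_bf6 n"
  then have tr: "t \<in> transf n" and z: "0 \<notin> t ` {0..<n}" and a1: "t (n-1) = n-1" and a2: "t (n-2) = n-1"
    and hj: "\<And>j. j \<ge> 1 \<Longrightarrow> (t ^^ j) 0 = n-1 \<or> (\<forall>q. 0 < q \<and> q < n-1 \<longrightarrow> (t ^^ j) 0 \<noteq> (t ^^ j) q)"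
    and d: "t 0 \<in> {n-2, n-1} \<or> (t 0 \<in> QM n \<and> (\<forall>q\<in>QM n. t q \<in> {n-2, n-1}))"
    unfolding W_bf6_def B_bf_def by auto
  have nz: "\<And>q. q \<in> QM n \<Longrightarrow> t q \<noteq> 0" using z n by (force simp: QM_iff)
  have h1: "t 0 = n-1 \<or> (\<forall>q. 0 < q \<and> q < n-1 \<longrightarrow> t 0 \<noteq> t q)" using hj[of 1] by simp
  show "charW n t" unfolding charW_def
  proof (intro conjI tr a1 a2)
    show "(t 0 = n-1 \<and> (\<forall>q\<in>QM n. t q \<noteq> 0)) \<or> (t 0 = n-2 \<and> (\<forall>q\<in>QM n. t q \<noteq> 0 \<and> t q \<noteq> n-2))
  \<or> (t 0 \<in> QM n \<and> (\<forall>q\<in>QM n. t q = n-2 \<or> t q = n-1))"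
    proof (cases "t 0 = n-2")
      case True
      have "\<forall>q\<in>QM n. t q \<noteq> n-2"
      proof
        fix q assume q: "q \<in> QM n"
        then have "0 < q \<and> q < n-1" using n by (auto simp: QM_iff)
        then show "t q \<noteq> n-2" using h1 True n by auto
      qed
      then show ?thesis using True nz by auto
    next
      case False then show ?thesis using d nz by auto
    qed
  qed
next
  assume c: "charW n t"
  then have tr: "t \<in> transf n" and a2: "t (n-2) = n-1" and a1: "t (n-1) = n-1"
    and d: "(t 0 = n-1 \<and> (\<forall>q\<in>QM n. t q \<noteq> 0)) \<or> (t 0 = n-2 \<and> (\<forall>q\<in>QM n. t q \<noteq> 0 \<and> t q \<noteq> n-2))
  \<or> (t 0 \<in> QM n \<and> (\<forall>q\<in>QM n. t q = n-2 \<or> t q = n-1))"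
    unfolding charW_def by auto
  have z: "0 \<notin> t ` {0..<n}"
  proof
    assume "0 \<in> t ` {0..<n}"
    then obtain q where q: "q < n" "t q = 0" by auto
    from states[OF n, of q] q have "q = 0 \<or> q \<in> QM n \<or> q = n-2 \<or> q = n-1" by auto
    moreover have "q \<in> QM n \<Longrightarrow> False" using q d n by auto
    moreover have "t 0 \<noteq> 0" using d n by (auto simp: QM_iff)
    ultimately show False using q a1 a2 n by auto
  qed
  have hj: "(t ^^ j) 0 = n-1 \<or> (\<forall>q. 0 < q \<and> q < n-1 \<longrightarrow> (t ^^ j) 0 \<noteq> (t ^^ j) q)" if j: "j \<ge> 1" for j
  proof -
    have qc: "\<And>q. 0 < q \<Longrightarrow> q < n-1 \<Longrightarrow> q \<in> QM n \<or> q = n-2" using n by (auto simp: QM_iff)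
    consider (A) "t 0 = n-1 \<and> (\<forall>q\<in>QM n. t q \<noteq> 0)" | (B) "t 0 = n-2 \<and> (\<forall>q\<in>QM n. t q \<noteq> 0 \<and> t q \<noteq> n-2)"
      | (C) "t 0 \<in> QM n \<and> (\<forall>q\<in>QM n. t q = n-2 \<or> t q = n-1)" using d by blast
    then show ?thesis
    proof cases
      case A
      have "(t ^^ j) 0 = n-1" by (rule funpow_stay[where t=t and k=1]) (use A a1 j in auto)
      then show ?thesis by simp
    next
      case B
      show ?thesis
      proof (cases "j = 1")
        case True
        have "\<forall>q. 0 < q \<and> q < n-1 \<longrightarrow> t 0 \<noteq> t q"
        proof (intro allI impI)
          fix q assume "0 < q \<and> q < n-1"
          then have "q \<in> QM n \<or> q = n-2" using qc by blast
          then show "t 0 \<noteq> t q" using B a2 n by auto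
        qed
        then show ?thesis using True by simp
      next
        case False
        have t2: "(t ^^ 2) 0 = n-1" using B a2 by (simp add: funpow2)
        have "(t ^^ j) 0 = n-1" by (rule funpow_stay[where t=t and k=2, OF t2 a1]) (use j False in linarith)
        then show ?thesis by simp
      qed
    next
      case C
      then obtain p where p: "t 0 = p" "p \<in> QM n" by blast
      have tp: "t p = n-2 \<or> t p = n-1" using C p by blast
      consider "j = 1" | "j = 2" | "j \<ge> 3" using j by linarith
      then show ?thesis
      proof cases
        case 1
        have "\<forall>q. 0 < q \<and> q < n-1 \<longrightarrow> t 0 \<noteq> t q"
        proof (intro allI impI)
          fix q assume "0 < q \<and> q < n-1"
          then have "q \<in> QM n \<or> q = n-2" using qc by blast
          moreover have "p \<le> n-3" using p(2) by (simp add: QM_iff)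
          moreover have "q \<in> QM n \<Longrightarrow> t q = n-2 \<or> t q = n-1" using C by blast
          ultimately have tq: "t q = n-2 \<or> t q = n-1" using a2 by blast
          have "p \<noteq> n-2" "p \<noteq> n-1" using \<open>p \<le> n-3\<close> n by linarith+
          then show "t 0 \<noteq> t q" using p(1) tq by metis
        qed
        then show ?thesis using 1 by simp
      next
        case 2
        have "t (t 0) = n-1 \<or> (\<forall>q. 0 < q \<and> q < n-1 \<longrightarrow> t (t 0) \<noteq> t (t q))"
        proof (cases "t (t 0) = n-1")
          case False
          have "\<forall>q. 0 < q \<and> q < n-1 \<longrightarrow> t (t 0) \<noteq> t (t q)"
          proof (intro allI impI)
            fix q assume "0 < q \<and> q < n-1"
            then have "q \<in> QM n \<or> q = n-2" using qc by blast
            moreover have "q \<in> QM n \<Longrightarrow> t q = n-2 \<or> t q = n-1" using C by blast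
            ultimately have "t (t q) = n-1" using a1 a2 by auto
            then show "t (t 0) \<noteq> t (t q)" using False by simp
          qed
          then show ?thesis by blast
        qed simp
        then show ?thesis using 2 by (simp add: funpow2)
      next
        case 3
        have "(t ^^ 3) 0 = n-1" using tp p a1 a2 by (auto simp: funpow3)
        then have "(t ^^ j) 0 = n-1" by (rule funpow_stay[where t=t and k=3]) (use a1 3 in auto)
        then show ?thesis by simp
      qed
    qed
  qed
  have "t 0 \<in> {n-2, n-1} \<or> (t 0 \<in> QM n \<and> (\<forall>q\<in>QM n. t q \<in> {n-2, n-1}))" using d by auto
  moreover have "t \<in> B_bf n" unfolding B_bf_def using tr z a1 a2 hj by blast
  ultimately show "t \<in> W_bf6 n" unfolding W_bf6_def by blast
qed


context fixes n :: nat assumes n: "4 \<le> n" begin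

lemma f1: "0 \<notin> QM n" "n-2 \<notin> QM n" "n-1 \<notin> QM n" "n-2 \<noteq> n-1" "n-2 \<noteq> 0" "n-1 \<noteq> 0"
  "n-2 < n" "n-1 < n" "1 \<in> QM n" "1 < n"
  using n by (auto simp: QM_iff)

lemma f2: assumes "q \<in> QM n" shows "q < n" "q \<noteq> 0" "q \<noteq> n-2" "q \<noteq> n-1" "0 < q" "q \<le> n-3"
  using assms n by (auto simp: QM_iff)

lemma f3: "n \<le> q \<Longrightarrow> q \<notin> QM n" using n by (auto simp: QM_iff)

lemma st: "q < n \<Longrightarrow> q = 0 \<or> q \<in> QM n \<or> q = n-2 \<or> q = n-1"
  using states[OF n, of q] by auto

lemma charW_nz: assumes "charW n t" "x < n" shows "t x \<noteq> 0"
proof -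
  have "t \<in> W_bf6 n" using W_char[OF n] assms by blast
  then have "0 \<notin> t ` {0..<n}" unfolding W_bf6_def B_bf_def by blast
  then show ?thesis using assms(2) by force
qed

lemma charW_lt: assumes "charW n t" "x < n" shows "t x < n"
  using assms unfolding charW_def transf_def by blast

lemma charW_ge: assumes "charW n t" "n \<le> x" shows "t x = x"
  using assms unfolding charW_def transf_def by blast

lemma charW_A: "t \<in> transf n \<Longrightarrow> t (n-2) = n-1 \<Longrightarrow> t (n-1) = n-1 \<Longrightarrow> t 0 = n-1
  \<Longrightarrow> (\<And>q. q \<in> QM n \<Longrightarrow> t q \<noteq> 0) \<Longrightarrow> charW n t"
  unfolding charW_def by simp
lemma charW_B: "t \<in> transf n \<Longrightarrow> t (n-2) = n-1 \<Longrightarrow> t (n-1) = n-1 \<Longrightarrow> t 0 = n-2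
  \<Longrightarrow> (\<And>q. q \<in> QM n \<Longrightarrow> t q \<noteq> 0 \<and> t q \<noteq> n-2) \<Longrightarrow> charW n t"
  unfolding charW_def by simp
lemma charW_C: "t \<in> transf n \<Longrightarrow> t (n-2) = n-1 \<Longrightarrow> t (n-1) = n-1 \<Longrightarrow> t 0 \<in> QM n
  \<Longrightarrow> (\<And>q. q \<in> QM n \<Longrightarrow> t q = n-2 \<or> t q = n-1) \<Longrightarrow> charW n t"
  unfolding charW_def by simp

lemma letters_char: assumes "a \<in> Sigma_W n" shows "charW n a"
proof -
  consider (b) i where "a = bW n i" "1 \<le> i" "i \<le> n-3" | (c) "a \<in> c_letters n" | (d) "a \<in> d_letters n"
    using assms unfolding Sigma_W_def by blast
  then show ?thesis
  proof cases
    case b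
    have iQ: "i \<in> QM n" using b by (simp add: QM_iff)
    have h1: "a \<in> transf n" unfolding transf_def b(1) bW_def using f1 f2[OF iQ] by auto
    have h2: "a (n-2) = n-1" "a (n-1) = n-1" "a 0 = n-1" unfolding b(1) bW_def using f1 f2[OF iQ] by auto
    show ?thesis
    proof (rule charW_A[OF h1 h2])
      fix q assume q: "q \<in> QM n"
      have "q \<noteq> 0" "n-2 \<noteq> 0" "n-1 \<noteq> 0" using f1 f2[OF q] by blast+
      then show "a q \<noteq> 0" unfolding b(1) bW_def by simp
    qed
  next
    case c
    then have "a \<in> transf n" "a (n-2) = n-1" "a (n-1) = n-1" "a 0 = n-2" "\<And>q. q\<in>QM n \<Longrightarrow> a q \<noteq> 0 \<and> a q \<noteq> n-2" unfolding c_letters_def by simp_all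
    then show ?thesis by (rule charW_B)
  next
    case d
    then have "a \<in> transf n" "a (n-2) = n-1" "a (n-1) = n-1" "a 0 \<in> QM n" "\<And>q. q\<in>QM n \<Longrightarrow> a q = n-2 \<or> a q = n-1" unfolding d_letters_def by simp_all
    then show ?thesis by (rule charW_C)
  qed
qed

lemma char_comp: assumes s: "charW n s" and t: "charW n t" shows "charW n (t \<circ> s)"
proof -
  have tr: "t \<circ> s \<in> transf n" unfolding transf_def
    using charW_lt[OF s] charW_lt[OF t] charW_ge[OF s] charW_ge[OF t] by simp
  have s2: "s (n-2) = n-1" "s (n-1) = n-1" and t2: "t (n-2) = n-1" "t (n-1) = n-1"
    using s t unfolding charW_def by blast+
  have u2: "(t\<circ>s) (n-2) = n-1" "(t\<circ>s) (n-1) = n-1" using s2 t2 by simp_all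
  have sd: "s 0 = n-1 \<or> s 0 = n-2 \<or> (s 0 \<in> QM n \<and> (\<forall>q\<in>QM n. s q = n-2 \<or> s q = n-1))"
    using s unfolding charW_def by blast
  have tnz: "\<And>q. q \<in> QM n \<Longrightarrow> (t \<circ> s) q \<noteq> 0"
  proof -
    fix q assume q: "q \<in> QM n"
    have "s q < n" using charW_lt[OF s f2(1)[OF q]] .
    then show "(t \<circ> s) q \<noteq> 0" using charW_nz[OF t] by simp
  qed
  show ?thesis
  proof (cases "s 0 \<in> QM n")
    case False
    then have "s 0 = n-1 \<or> s 0 = n-2" using sd by blast
    then have "(t\<circ>s) 0 = n-1" using t2 by auto
    then show ?thesis by (rule charW_A[OF tr u2 _ tnz])
  next
    case True
    then have sq0: "\<forall>q\<in>QM n. s q = n-2 \<or> s q = n-1" using sd f1 by auto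
    have sq: "\<And>q. q \<in> QM n \<Longrightarrow> (t\<circ>s) q = n-1"
    proof -
      fix q assume "q \<in> QM n"
      then have "s q = n-2 \<or> s q = n-1" using sq0 by blast
      then show "(t\<circ>s) q = n-1" using t2 by auto
    qed
    have s0: "s 0 < n" using f2(1)[OF True] .
    have "t (s 0) < n" using charW_lt[OF t s0] .
    moreover have "t (s 0) \<noteq> 0" using charW_nz[OF t s0] .
    ultimately have "t (s 0) = n-1 \<or> t (s 0) = n-2 \<or> t (s 0) \<in> QM n" using st[of "t (s 0)"] by metis
    moreover have "n-1 \<noteq> 0" "n-1 \<noteq> n-2" using f1 by auto
    ultimately consider "(t\<circ>s) 0 = n-1" | "(t\<circ>s) 0 = n-2" | "(t\<circ>s) 0 \<in> QM n" by (metis comp_apply)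
    then show ?thesis
    proof cases
      case 1 show ?thesis by (rule charW_A[OF tr u2 1 tnz])
    next
      case 2 show ?thesis
      proof (rule charW_B[OF tr u2 2])
        fix q assume "q \<in> QM n" then show "(t\<circ>s) q \<noteq> 0 \<and> (t\<circ>s) q \<noteq> n-2"
          using sq[of q] \<open>n-1 \<noteq> 0\<close> \<open>n-1 \<noteq> n-2\<close> by simp
      qed
    next
      case 3 show ?thesis
      proof (rule charW_C[OF tr u2 3])
        fix q assume "q \<in> QM n" then show "(t\<circ>s) q = n-2 \<or> (t\<circ>s) q = n-1"
          using sq[of q] by simp
      qed
    qed
  qed
qed

end

definition c0 :: "nat \<Rightarrow> nat \<Rightarrow> nat" where
  "c0 n = (\<lambda>q. if q = 0 then n-2 else if q \<in> QM n then q else if q < n then n-1 else q)"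
definition dp :: "nat \<Rightarrow> nat \<Rightarrow> nat \<Rightarrow> nat" where
  "dp n p = (\<lambda>q. if q = 0 then p else if q \<in> QM n then n-2 else if q < n then n-1 else q)"
definition yA :: "nat \<Rightarrow> (nat \<Rightarrow> nat) \<Rightarrow> nat \<Rightarrow> nat \<Rightarrow> nat" where
  "yA n t i = (\<lambda>q. if q = 0 then n-2 else if q \<in> QM n then (if t q = n-2 then i else t q) else if q < n then n-1 else q)"

context fixes n :: nat assumes n: "4 \<le> n" begin

lemma fun_eq_cases:
  assumes "f 0 = g 0" "\<And>q. q \<in> QM n \<Longrightarrow> f q = g q" "f (n-2) = g (n-2)" "f (n-1) = g (n-1)"
    "\<And>q. n \<le> q \<Longrightarrow> f q = g q"
  shows "f = g"
proof (rule ext)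
  fix q show "f q = g q"
  proof (cases "q < n")
    case True
    then have "q = 0 \<or> q \<in> QM n \<or> q = n-2 \<or> q = n-1" using st[OF n] by blast
    then show ?thesis using assms by blast
  next
    case False then show ?thesis using assms(5) by simp
  qed
qed

lemma n21: "n - 2 \<noteq> 1" "n-1 \<noteq> 1" using n by auto

lemma c0_letter: "c0 n \<in> c_letters n"
proof -
  note F = f1[OF n] n21 n
  have "c0 n \<in> transf n" unfolding transf_def c0_def using F f3[OF n] f2[OF n] by auto
  moreover have "c0 n 0 = n-2" "c0 n (n-2) = n-1" "c0 n (n-1) = n-1" unfolding c0_def using F by auto
  moreover have "\<forall>q\<in>QM n. c0 n q \<notin> {0, n-2}"
  proof
    fix q assume q: "q \<in> QM n"
    show "c0 n q \<notin> {0, n-2}" unfolding c0_def using q f2[OF n q] by simp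
  qed
  moreover have "c0 n \<noteq> cExcl n"
  proof
    assume "c0 n = cExcl n"
    then have "c0 n 1 = cExcl n 1" by simp
    then show False unfolding c0_def cExcl_def using F by simp
  qed
  ultimately show ?thesis unfolding c_letters_def by blast
qed

lemma dp_letter: assumes p: "p \<in> QM n" shows "dp n p \<in> d_letters n"
proof -
  note F = f1[OF n] n21 n
  have "dp n p \<in> transf n" unfolding transf_def dp_def using F f3[OF n] f2[OF n] f2(1)[OF n p] by auto
  moreover have "dp n p 0 \<in> QM n" "dp n p (n-2) = n-1" "dp n p (n-1) = n-1" unfolding dp_def using F p by auto
  moreover have "\<forall>q\<in>QM n. dp n p q \<in> {n-2, n-1}"
  proof
    fix q assume q: "q \<in> QM n"
    show "dp n p q \<in> {n-2, n-1}" unfolding dp_def using q f2[OF n q] by simp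
  qed
  moreover have "\<forall>p'\<in>QM n. dp n p \<noteq> dExcl n p'"
  proof (intro ballI notI)
    fix p' assume "dp n p = dExcl n p'"
    then have "dp n p 1 = dExcl n p' 1" by simp
    then show False unfolding dp_def dExcl_def using F by simp
  qed
  ultimately show ?thesis unfolding d_letters_def by blast
qed

abbreviation "S \<equiv> trans_semigroup (Sigma_W n)"

lemma c0_S: "c0 n \<in> S" using c0_letter unfolding Sigma_W_def by (intro ts_letter) blast
lemma dp_S: "p \<in> QM n \<Longrightarrow> dp n p \<in> S" using dp_letter unfolding Sigma_W_def by (intro ts_letter) blast
lemma bW_S: "i \<in> QM n \<Longrightarrow> bW n i \<in> S"
  unfolding Sigma_W_def QM_iff by (intro ts_letter) blast

lemma cExcl_S: "cExcl n \<in> S"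
proof -
  note F = f1[OF n] n21 n
  have "cExcl n = bW n 1 \<circ> dp n 1"
  proof (rule fun_eq_cases)
    show "cExcl n 0 = (bW n 1 \<circ> dp n 1) 0" unfolding cExcl_def bW_def dp_def by simp
    show "cExcl n (n-2) = (bW n 1 \<circ> dp n 1) (n-2)" unfolding cExcl_def bW_def dp_def using F by simp
    show "cExcl n (n-1) = (bW n 1 \<circ> dp n 1) (n-1)" unfolding cExcl_def bW_def dp_def using F by simp
    fix q
    show "q \<in> QM n \<Longrightarrow> cExcl n q = (bW n 1 \<circ> dp n 1) q" unfolding cExcl_def bW_def dp_def
      using F f2[OF n, of q] by simp
    show "n \<le> q \<Longrightarrow> cExcl n q = (bW n 1 \<circ> dp n 1) q" unfolding cExcl_def bW_def dp_def
      using F f3[OF n, of q] by simp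
  qed
  then show ?thesis using ts_comp[OF dp_S bW_S] F by simp
qed

lemma dExcl_S: assumes p: "p \<in> QM n" shows "dExcl n p \<in> S"
proof -
  note F = f1[OF n] n21 n
  note P = f2[OF n p]
  have "dExcl n p = c0 n \<circ> dp n p"
  proof (rule fun_eq_cases)
    show "dExcl n p 0 = (c0 n \<circ> dp n p) 0" unfolding dExcl_def c0_def dp_def using p P by simp
    show "dExcl n p (n-2) = (c0 n \<circ> dp n p) (n-2)" unfolding dExcl_def c0_def dp_def using F by simp
    show "dExcl n p (n-1) = (c0 n \<circ> dp n p) (n-1)" unfolding dExcl_def c0_def dp_def using F by simp
    fix q
    show "q \<in> QM n \<Longrightarrow> dExcl n p q = (c0 n \<circ> dp n p) q" unfolding dExcl_def c0_def dp_def
      using F f2[OF n, of q] by simp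
    show "n \<le> q \<Longrightarrow> dExcl n p q = (c0 n \<circ> dp n p) q" unfolding dExcl_def c0_def dp_def
      using F f3[OF n, of q] by simp
  qed
  then show ?thesis using ts_comp[OF dp_S[OF p] c0_S] by simp
qed

lemma B_S: assumes tr: "t \<in> transf n" and t2: "t (n-2) = n-1" "t (n-1) = n-1" and t0: "t 0 = n-2"
  and tq: "\<And>q. q \<in> QM n \<Longrightarrow> t q \<noteq> 0 \<and> t q \<noteq> n-2"
  shows "t \<in> S"
proof (cases "t = cExcl n")
  case True then show ?thesis using cExcl_S by simp
next
  case False
  have "t \<in> c_letters n" unfolding c_letters_def using tr t2 t0 tq False by auto
  then show ?thesis unfolding Sigma_W_def by (intro ts_letter) blast
qed

lemma C_S: assumes tr: "t \<in> transf n" and t2: "t (n-2) = n-1" "t (n-1) = n-1" and t0: "t 0 \<in> QM n"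
  and tq: "\<And>q. q \<in> QM n \<Longrightarrow> t q = n-2 \<or> t q = n-1"
  shows "t \<in> S"
proof (cases "\<exists>p\<in>QM n. t = dExcl n p")
  case True then show ?thesis using dExcl_S by blast
next
  case False
  have "t \<in> d_letters n" unfolding d_letters_def using tr t2 t0 tq False by blast
  then show ?thesis unfolding Sigma_W_def by (intro ts_letter) blast
qed

lemma yA_S: assumes tr: "t \<in> transf n" and i: "i \<in> QM n" and tq: "\<And>q. q \<in> QM n \<Longrightarrow> t q \<noteq> 0"
  shows "yA n t i \<in> S"
proof (rule B_S)
  note F = f1[OF n] n21 n
  show "yA n t i \<in> transf n" unfolding transf_def mem_Collect_eq
  proof (intro conjI allI impI)
    fix q assume q: "q < n"
    have "t q < n" using tr q unfolding transf_def by blast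
    then show "yA n t i q < n" unfolding yA_def using F f2(1)[OF n i] q by auto
  next
    fix q assume q: "n \<le> q"
    then show "yA n t i q = q" unfolding yA_def using f3[OF n q] by simp
  qed
  show "yA n t i (n-2) = n-1" "yA n t i (n-1) = n-1" "yA n t i 0 = n-2" unfolding yA_def using F by auto
  fix q assume q: "q \<in> QM n"
  show "yA n t i q \<noteq> 0 \<and> yA n t i q \<noteq> n-2" unfolding yA_def using q tq[OF q] f2[OF n i] f2[OF n q] by simp
qed

lemma pigeon: assumes k: "k \<in> QM n" "t k = n-2" shows "\<exists>i\<in>QM n. i \<notin> t ` QM n"
proof (rule ccontr)
  assume "\<not> ?thesis"
  then have sub: "QM n \<subseteq> t ` QM n" by blast
  have "QM n \<subseteq> t ` (QM n - {k})"
  proof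
    fix i assume i: "i \<in> QM n"
    then obtain q where q: "q \<in> QM n" "i = t q" using sub by blast
    have "q \<noteq> k" using q i k f2(3)[OF n i] by auto
    then show "i \<in> t ` (QM n - {k})" using q by blast
  qed
  have fin: "finite (QM n)" unfolding QM_def by simp
  have "card (QM n) \<le> card (t ` (QM n - {k}))" by (rule card_mono) (use fin \<open>QM n \<subseteq> t ` (QM n - {k})\<close> in auto)
  also have "\<dots> \<le> card (QM n - {k})" by (rule card_image_le) (use fin in simp)
  also have "\<dots> < card (QM n)" using fin k(1) by (rule card_Diff1_less)
  finally show False by simp
qed

lemma A_S: assumes tr: "t \<in> transf n" and t2: "t (n-2) = n-1" "t (n-1) = n-1" and t0: "t 0 = n-1"
  and tq: "\<And>q. q \<in> QM n \<Longrightarrow> t q \<noteq> 0"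
  shows "t \<in> S"
proof -
  note F = f1[OF n] n21 n
  have tlt: "\<And>q. q < n \<Longrightarrow> t q < n" and tge: "\<And>q. n \<le> q \<Longrightarrow> t q = q" using tr unfolding transf_def by blast+
  show ?thesis
  proof (cases "\<exists>k\<in>QM n. t k = n-2")
    case False
    have "t = c0 n \<circ> yA n t 1"
    proof (rule fun_eq_cases)
      show "t 0 = (c0 n \<circ> yA n t 1) 0" unfolding c0_def yA_def using F t0 by simp
      show "t (n-2) = (c0 n \<circ> yA n t 1) (n-2)" unfolding c0_def yA_def using F t2 by simp
      show "t (n-1) = (c0 n \<circ> yA n t 1) (n-1)" unfolding c0_def yA_def using F t2 by simp
      fix q
      show "n \<le> q \<Longrightarrow> t q = (c0 n \<circ> yA n t 1) q" unfolding c0_def yA_def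
        using F f3[OF n, of q] tge[of q] by simp
      assume q: "q \<in> QM n"
      have a: "t q \<noteq> n-2" using False q by blast
      have b: "t q \<noteq> 0" using tq[OF q] .
      have c: "t q < n" using tlt f2(1)[OF n q] by blast
      have "t q = 0 \<or> t q \<in> QM n \<or> t q = n-2 \<or> t q = n-1" using st[OF n c] .
      then have d: "t q \<in> QM n \<or> t q = n-1" using a b by blast
      have e: "yA n t 1 q = t q" unfolding yA_def using q a f2[OF n q] by simp
      show "t q = (c0 n \<circ> yA n t 1) q"
        using d
      proof
        assume "t q \<in> QM n" then show ?thesis using e f2[OF n, of "t q"] unfolding c0_def by simp
      next
        assume "t q = n-1" then show ?thesis using e F unfolding c0_def by simp
      qed
    qed
    then show ?thesis using ts_comp[OF yA_S[OF tr F(9) tq] c0_S] by simp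
  next
    case True
    then obtain k where k: "k \<in> QM n" "t k = n-2" by blast
    obtain i where i: "i \<in> QM n" "i \<notin> t ` QM n" using pigeon[where k=k and t=t, OF k(1) k(2)] by blast
    note I = f2[OF n i(1)]
    have "t = bW n i \<circ> yA n t i"
    proof (rule fun_eq_cases)
      show "t 0 = (bW n i \<circ> yA n t i) 0" unfolding bW_def yA_def using F t0 I by simp
      show "t (n-2) = (bW n i \<circ> yA n t i) (n-2)" unfolding bW_def yA_def using F t2 I by simp
      show "t (n-1) = (bW n i \<circ> yA n t i) (n-1)" unfolding bW_def yA_def using F t2 I by simp
      fix q
      show "n \<le> q \<Longrightarrow> t q = (bW n i \<circ> yA n t i) q" unfolding bW_def yA_def
        using F f3[OF n, of q] tge[of q] I n by auto
      assume q: "q \<in> QM n"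
      note Q = f2[OF n q]
      show "t q = (bW n i \<circ> yA n t i) q"
      proof (cases "t q = n-2")
        case True then show ?thesis unfolding bW_def yA_def using q Q I by simp
      next
        case False
        have "t q \<noteq> i" using i q by blast
        then show ?thesis unfolding bW_def yA_def using q Q False tq[OF q] by simp
      qed
    qed
    then show ?thesis using ts_comp[OF yA_S[OF tr i(1) tq] bW_S[OF i(1)]] by simp
  qed
qed

end

theorem mainTheorem7:
  fixes n :: nat
  assumes "n \<ge> 4"
  shows "trans_semigroup (Sigma_W n) = W_bf6 n"
proof
  show "trans_semigroup (Sigma_W n) \<subseteq> W_bf6 n"
  proof
    fix t assume "t \<in> trans_semigroup (Sigma_W n)"
    then show "t \<in> W_bf6 n"
    proof (rule ts_induct)
      fix a assume "a \<in> Sigma_W n"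
      then show "a \<in> W_bf6 n" using W_char[OF assms] letters_char[OF assms] by blast
    next
      fix s a assume "s \<in> W_bf6 n" "a \<in> Sigma_W n"
      then have "charW n s" "charW n a" using W_char[OF assms] letters_char[OF assms] by blast+
      then show "a \<circ> s \<in> W_bf6 n" using W_char[OF assms] char_comp[OF assms] by blast
    qed
  qed
next
  show "W_bf6 n \<subseteq> trans_semigroup (Sigma_W n)"
  proof
    fix t assume "t \<in> W_bf6 n"
    then have c: "charW n t" using W_char[OF assms] by blast
    then have tr: "t \<in> transf n" and t2: "t (n-2) = n-1" "t (n-1) = n-1"
      and d: "(t 0 = n-1 \<and> (\<forall>q\<in>QM n. t q \<noteq> 0)) \<or> (t 0 = n-2 \<and> (\<forall>q\<in>QM n. t q \<noteq> 0 \<and> t q \<noteq> n-2))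
  \<or> (t 0 \<in> QM n \<and> (\<forall>q\<in>QM n. t q = n-2 \<or> t q = n-1))" unfolding charW_def by blast+
    from d show "t \<in> trans_semigroup (Sigma_W n)"
    proof (elim disjE conjE)
      assume "t 0 = n-1" "\<forall>q\<in>QM n. t q \<noteq> 0"
      then show ?thesis using A_S[OF assms tr t2] by blast
    next
      assume "t 0 = n-2" "\<forall>q\<in>QM n. t q \<noteq> 0 \<and> t q \<noteq> n-2"
      then show ?thesis using B_S[OF assms tr t2] by blast
    next
      assume "t 0 \<in> QM n" "\<forall>q\<in>QM n. t q = n-2 \<or> t q = n-1"
      then show ?thesis using C_S[OF assms tr t2] by blast
    qed
  qed
qed

end
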